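(* Let $Y\in\mathbb{R}^{n\times p}$. Suppose either (i) $Y$ is 1-critical for (BM) with a multiplier $\lambda$ (as in the definition of 1-criticality) satisfying $S(\lambda)\in\mathbb{S}^n_+$, or (ii) $Y$ is 2-critical for (BM) and $Y$ is column rank deficient (i.e. $\operatorname{rank} Y<p$). Then $Y$ is a global minimizer of (BM).
   Context: Let $\mathbb{S}^n$ be the space of real symmetric $n\times n$ matrices, with inner product $A\bullet B=\operatorname{trace}(A^TB)$ (also used for $A\in\mathbb{S}^n$, $B\in\mathbb{R}^{n\times n}$), and $\mathbb{S}^n_+$ the cone of positive semidefinite matrices. Let $m=m_1+m_2$, let $C,A_1,\dots,A_m\in\mathbb{S}^n$, $b\in\mathbb{R}^m$, $\mathcal{A}^*(\lambda)=\sum_i\lambda_iA_i$. Let $\mathscr{X}=\{X\in\mathbb{S}^n_+ : A_i\bullet X=b_i \ (i\le m_1),\ A_i\bullet X\ge b_i\ (m_1<i\le m)\}$; assume $\mathscr{X}$ is nonempty and that $\min_{X\in\mathscr{X}} C\bullet X$ is attained. Problem (BM) is $\min_{Y\in\mathbb{R}^{n\times p}} C\bullet YY^T$ subject to $YY^T\in\mathscr{X}$. For $Y$, let $I(Y)=\{i: A_i\bullet YY^T=b_i\}$ and $S(\lambda)=C-\mathcal{A}^*(\lambda)$. A point $Y$ is 1-critical for (BM) with multiplier $\lambda$ if $YY^T\in\mathscr{X}$, $\lambda\in\mathbb{R}^{m_1}\times\mathbb{R}^{m_2}_+$, $\lambda_i=0$ for $i\notin I(Y)$ and $S(\lambda)Y=0$;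 it is 2-critical if moreover $S(\lambda)\bullet UU^T\ge 0$ for all $U\in\mathbb{R}^{n\times p}$ with $A_i\bullet UY^T=0$ for all $i\in I(Y)$. *)

theory Defs
  imports "HOL-Analysis.Analysis"
begin

text \<open>Matrices: an n x p real matrix is real^'p^'n (rows indexed by 'n).
  Constraint indices are 0-based: i < m1 equality, m1 \<le> i < m1+m2 inequality.\<close>

definition mtrace :: "real^'n^'n \<Rightarrow> real" where
  "mtrace M = (\<Sum>i\<in>UNIV. M $ i $ i)"

definition frob :: "real^'n^'m \<Rightarrow> real^'n^'m \<Rightarrow> real" where
  "frob A B = mtrace (transpose A ** B)"

definition symmetric_mat :: "real^'n^'n \<Rightarrow> bool" where
  "symmetric_mat A \<longleftrightarrow> transpose A = A"

definition psd :: "real^'n^'n \<Rightarrow> bool" where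
  "psd A \<longleftrightarrow> symmetric_mat A \<and> (\<forall>x. 0 \<le> x \<bullet> (A *v x))"

definition feasible_set ::
  "(nat \<Rightarrow> real^'n^'n) \<Rightarrow> (nat \<Rightarrow> real) \<Rightarrow> nat \<Rightarrow> nat \<Rightarrow> (real^'n^'n) set" where
  "feasible_set A b m1 m2 = {X. psd X \<and> (\<forall>i<m1. frob (A i) X = b i)
       \<and> (\<forall>i. m1 \<le> i \<and> i < m1 + m2 \<longrightarrow> frob (A i) X \<ge> b i)}"

definition active_set ::
  "(nat \<Rightarrow> real^'n^'n) \<Rightarrow> (nat \<Rightarrow> real) \<Rightarrow> nat \<Rightarrow> real^'p^'n \<Rightarrow> nat set" where
  "active_set A b m Y = {i. i < m \<and> frob (A i) (Y ** transpose Y) = b i}"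

definition Smat ::
  "real^'n^'n \<Rightarrow> (nat \<Rightarrow> real^'n^'n) \<Rightarrow> nat \<Rightarrow> (nat \<Rightarrow> real) \<Rightarrow> real^'n^'n" where
  "Smat C A m lam = C - (\<Sum>i<m. lam i *\<^sub>R A i)"

definition one_critical ::
  "real^'n^'n \<Rightarrow> (nat \<Rightarrow> real^'n^'n) \<Rightarrow> (nat \<Rightarrow> real) \<Rightarrow> nat \<Rightarrow> nat
     \<Rightarrow> real^'p^'n \<Rightarrow> (nat \<Rightarrow> real) \<Rightarrow> bool" where
  "one_critical C A b m1 m2 Y lam \<longleftrightarrow>
     Y ** transpose Y \<in> feasible_set A b m1 m2
     \<and> (\<forall>i. m1 \<le> i \<and> i < m1 + m2 \<longrightarrow> lam i \<ge> 0)
     \<and> (\<forall>i<m1 + m2. i \<notin> active_set A b (m1 + m2) Y \<longrightarrow> lam i = 0)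
     \<and> Smat C A (m1 + m2) lam ** Y = 0"

definition two_critical ::
  "real^'n^'n \<Rightarrow> (nat \<Rightarrow> real^'n^'n) \<Rightarrow> (nat \<Rightarrow> real) \<Rightarrow> nat \<Rightarrow> nat
     \<Rightarrow> real^'p^'n \<Rightarrow> (nat \<Rightarrow> real) \<Rightarrow> bool" where
  "two_critical C A b m1 m2 Y lam \<longleftrightarrow>
     one_critical C A b m1 m2 Y lam
     \<and> (\<forall>U :: real^'p^'n.
          (\<forall>i\<in>active_set A b (m1 + m2) Y. frob (A i) (U ** transpose Y) = 0)
          \<longrightarrow> frob (Smat C A (m1 + m2) lam) (U ** transpose U) \<ge> 0)"

definition bm_global_min ::
  "real^'n^'n \<Rightarrow> (nat \<Rightarrow> real^'n^'n) \<Rightarrow> (nat \<Rightarrow> real) \<Rightarrow> nat \<Rightarrow> nat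
     \<Rightarrow> real^'p^'n \<Rightarrow> bool" where
  "bm_global_min C A b m1 m2 Y \<longleftrightarrow>
     Y ** transpose Y \<in> feasible_set A b m1 m2
     \<and> (\<forall>Z :: real^'p^'n. Z ** transpose Z \<in> feasible_set A b m1 m2
          \<longrightarrow> frob C (Y ** transpose Y) \<le> frob C (Z ** transpose Z))"

end

theory Submission
  imports Defs
begin

lemma frob_eq: "frob (A::real^'n^'m) B = (\<Sum>i\<in>UNIV. \<Sum>j\<in>UNIV. A$i$j * B$i$j)"
proof -
  have "frob A B = (\<Sum>j\<in>UNIV. \<Sum>i\<in>UNIV. A$i$j * B$i$j)"
    unfolding frob_def mtrace_def matrix_matrix_mult_def transpose_def by simp
  also have "\<dots> = (\<Sum>i\<in>UNIV. \<Sum>j\<in>UNIV. A$i$j * B$i$j)" by (rule sum.swap)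
  finally show ?thesis .
qed

lemma swap3: "(\<Sum>i\<in>UNIV. \<Sum>j\<in>UNIV. \<Sum>k\<in>UNIV. f i j k) = (\<Sum>k\<in>UNIV. \<Sum>i\<in>UNIV. \<Sum>j\<in>UNIV. (f i j k::real))"
proof -
  have "(\<Sum>i\<in>UNIV. \<Sum>j\<in>UNIV. \<Sum>k\<in>UNIV. f i j k) = (\<Sum>i\<in>UNIV. \<Sum>k\<in>UNIV. \<Sum>j\<in>UNIV. f i j k)"
    by (rule sum.cong[OF refl], rule sum.swap)
  also have "\<dots> = (\<Sum>k\<in>UNIV. \<Sum>i\<in>UNIV. \<Sum>j\<in>UNIV. f i j k)" by (rule sum.swap)
  finally show ?thesis .
qed

lemma frob_add: "frob (A + B) X = frob A X + frob B X"
  by (simp add: frob_eq algebra_simps sum.distrib)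
lemma frob_diff: "frob (A - B) X = frob A X - frob B X"
  by (simp add: frob_eq algebra_simps sum_subtractf)
lemma frob_scale: "frob (c *\<^sub>R A) X = c * frob A X"
  by (simp add: frob_eq algebra_simps sum_distrib_left)
lemma frob_zero: "frob 0 X = 0" by (simp add: frob_eq)
lemma frob_zero2: "frob A 0 = 0" by (simp add: frob_eq)
lemma frob_sum: "frob (\<Sum>i\<in>I. f i) X = (\<Sum>i\<in>I. frob (f i) X)"
  by (induction I rule: infinite_finite_induct) (simp_all add: frob_add frob_zero)

lemma frob_outer_zero:
  fixes S :: "real^'n^'n" and Y :: "real^'p^'n"
  assumes "S ** Y = 0"
  shows "frob S (Y ** transpose Y) = 0"
proof -
  have h: "(\<Sum>j\<in>UNIV. S$i$j * Y$j$k) = 0" for i k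
  proof -
    have "(S ** Y)$i$k = 0" using assms by simp
    then show ?thesis by (simp add: matrix_matrix_mult_def)
  qed
  have e1: "(Y ** transpose Y)$i$j = (\<Sum>k\<in>UNIV. Y$i$k * Y$j$k)" for i j
    by (simp add: matrix_matrix_mult_def transpose_def)
  have inner: "(\<Sum>j\<in>UNIV. S$i$j * (\<Sum>k\<in>UNIV. Y$i$k * Y$j$k)) = 0" for i
  proof -
    have "(\<Sum>j\<in>UNIV. S$i$j * (\<Sum>k\<in>UNIV. Y$i$k * Y$j$k)) = (\<Sum>j\<in>UNIV. \<Sum>k\<in>UNIV. Y$i$k * (S$i$j * Y$j$k))"
      by (simp add: sum_distrib_left algebra_simps)
    also have "\<dots> = (\<Sum>k\<in>UNIV. \<Sum>j\<in>UNIV. Y$i$k * (S$i$j * Y$j$k))" by (rule sum.swap)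
    also have "\<dots> = (\<Sum>k\<in>UNIV. Y$i$k * (\<Sum>j\<in>UNIV. S$i$j * Y$j$k))" by (simp add: sum_distrib_left)
    also have "\<dots> = 0" by (simp add: h)
    finally show ?thesis .
  qed
  show ?thesis unfolding frob_eq e1 inner by simp
qed

lemma frob_psd:
  fixes S :: "real^'n^'n" and Z :: "real^'p^'n"
  assumes "psd S"
  shows "frob S (Z ** transpose Z) \<ge> 0"
proof -
  define z where "z k = (\<chi> i. Z$i$k)" for k
  have e1: "(Z ** transpose Z)$i$j = (\<Sum>k\<in>UNIV. Z$i$k * Z$j$k)" for i j
    by (simp add: matrix_matrix_mult_def transpose_def)
  have "frob S (Z ** transpose Z) = (\<Sum>i\<in>UNIV. \<Sum>j\<in>UNIV. \<Sum>k\<in>UNIV. S$i$j * (Z$i$k * Z$j$k))"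
    unfolding frob_eq e1 by (simp only: sum_distrib_left)
  also have "\<dots> = (\<Sum>k\<in>UNIV. \<Sum>i\<in>UNIV. \<Sum>j\<in>UNIV. S$i$j * (Z$i$k * Z$j$k))"
    by (rule swap3)
  also have "\<dots> = (\<Sum>k\<in>UNIV. z k \<bullet> (S *v z k))"
  proof (rule sum.cong[OF refl])
    fix k
    have "z k \<bullet> (S *v z k) = (\<Sum>i\<in>UNIV. Z$i$k * (\<Sum>j\<in>UNIV. S$i$j * Z$j$k))"
      by (simp add: z_def inner_vec_def matrix_vector_mult_def)
    also have "\<dots> = (\<Sum>i\<in>UNIV. \<Sum>j\<in>UNIV. S$i$j * (Z$i$k * Z$j$k))"
      by (simp add: sum_distrib_left mult.commute mult.left_commute)
    finally show "(\<Sum>i\<in>UNIV. \<Sum>j\<in>UNIV. S$i$j * (Z$i$k * Z$j$k)) = z k \<bullet> (S *v z k)" by simp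
  qed
  also have "\<dots> \<ge> 0" using assms unfolding psd_def by (simp add: sum_nonneg)
  finally show ?thesis .
qed
lemma one_crit_min:
  assumes oc: "one_critical C A b m1 m2 (Y::real^'p^'n) lam" and ps: "psd (Smat C A (m1 + m2) lam)"
  shows "bm_global_min C A b m1 m2 Y"
proof -
  define S where "S = Smat C A (m1 + m2) lam"
  have Ceq: "C = S + (\<Sum>i<m1+m2. lam i *\<^sub>R A i)" by (simp add: S_def Smat_def)
  have fC: "frob C X = frob S X + (\<Sum>i<m1+m2. lam i * frob (A i) X)" for X
    by (subst Ceq) (simp add: frob_add frob_sum frob_scale)
  have feasY: "Y ** transpose Y \<in> feasible_set A b m1 m2"
    and lampos: "\<forall>i. m1 \<le> i \<and> i < m1 + m2 \<longrightarrow> lam i \<ge> 0"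
    and lamz: "\<forall>i<m1 + m2. i \<notin> active_set A b (m1 + m2) Y \<longrightarrow> lam i = 0"
    and SY: "S ** Y = 0" using oc by (auto simp: one_critical_def S_def)
  have "frob C (Y ** transpose Y) = (\<Sum>i<m1+m2. lam i * b i)"
    unfolding fC frob_outer_zero[OF SY]
    apply (simp)
    apply (rule sum.cong, simp)
    using lamz by (auto simp: active_set_def)
  moreover have "(\<Sum>i<m1+m2. lam i * b i) \<le> frob C (Z ** transpose Z)"
    if fz: "Z ** transpose Z \<in> feasible_set A b m1 m2" for Z :: "real^'p^'n"
  proof -
    have "(\<Sum>i<m1+m2. lam i * b i) \<le> (\<Sum>i<m1+m2. lam i * frob (A i) (Z ** transpose Z))"
    proof (rule sum_mono)
      fix i assume "i \<in> {..<m1+m2}"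
      then show "lam i * b i \<le> lam i * frob (A i) (Z ** transpose Z)"
        using fz lampos by (cases "i < m1") (auto simp: feasible_set_def intro: mult_left_mono)
    qed
    also have "\<dots> \<le> frob C (Z ** transpose Z)"
      unfolding fC using frob_psd[OF ps[folded S_def]] by simp
    finally show ?thesis .
  qed
  ultimately show ?thesis using feasY unfolding bm_global_min_def by auto
qed

lemma sym_entries: "symmetric_mat M \<longleftrightarrow> (\<forall>i j. M$j$i = M$i$j)"
  by (auto simp: symmetric_mat_def transpose_def vec_eq_iff)

lemma smat_entry: "Smat C A m lam $ i $ j = C$i$j - (\<Sum>k<m. lam k * A k $i$j)"
  by (simp add: Smat_def sum_component)

lemma two_crit_psd:
  assumes symC: "symmetric_mat C"
    and symA: "\<forall>i < m1 + m2. symmetric_mat (A i)"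
    and tc: "two_critical C A b m1 m2 (Y::real^'p^'n) lam" and rk: "rank Y < CARD('p)"
  shows "psd (Smat C A (m1 + m2) lam)"
proof -
  define S where "S = Smat C A (m1 + m2) lam"
  have "symmetric_mat S"
    using symC symA unfolding sym_entries S_def smat_entry by auto
  moreover have "0 \<le> x \<bullet> (S *v x)" for x
  proof -
    obtain v where v: "v \<noteq> 0" "Y *v v = 0"
      using rk matrix_nonfull_linear_equations_eq[of Y] by auto
    define U :: "real^'p^'n" where "U = (\<chi> i j. x$i * v$j)"
    have hv: "(\<Sum>k\<in>UNIV. Y$j$k * v$k) = 0" for j
    proof -
      have "(Y *v v)$j = 0" using v(2) by simp
      then show ?thesis by (simp add: matrix_vector_mult_def)
    qed
    have "U ** transpose Y = 0"
    proof -
      have "(U ** transpose Y)$i$j = x$i * (\<Sum>k\<in>UNIV. Y$j$k * v$k)" for i j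
        by (simp add: U_def matrix_matrix_mult_def transpose_def sum_distrib_left algebra_simps)
      then show ?thesis using hv by (simp add: vec_eq_iff)
    qed
    then have "frob S (U ** transpose U) \<ge> 0"
      using tc unfolding two_critical_def S_def by (auto simp: frob_zero2)
    moreover have "frob S (U ** transpose U) = (v \<bullet> v) * (x \<bullet> (S *v x))"
    proof -
      have e: "(U ** transpose U)$i$j = x$i * x$j * (v \<bullet> v)" for i j
        by (simp add: U_def matrix_matrix_mult_def transpose_def inner_vec_def sum_distrib_left algebra_simps)
      show ?thesis unfolding frob_eq e
        by (simp add: inner_vec_def matrix_vector_mult_def sum_distrib_left algebra_simps)
    qed
    moreover have "v \<bullet> v > 0" using v(1) by simp
    ultimately show ?thesis by (simp add: zero_le_mult_iff)
  qed
  ultimately show ?thesis unfolding psd_def S_def by auto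
qed

theorem lemma4:
  fixes C :: "real^'n^'n" and A :: "nat \<Rightarrow> real^'n^'n" and b :: "nat \<Rightarrow> real"
    and m1 m2 :: nat and Y :: "real^'p^'n"
  assumes symC: "symmetric_mat C"
    and symA: "\<forall>i < m1 + m2. symmetric_mat (A i)"
    and nonempty: "feasible_set A b m1 m2 \<noteq> {}"
    and attained: "\<exists>X\<in>feasible_set A b m1 m2. \<forall>X'\<in>feasible_set A b m1 m2. frob C X \<le> frob C X'"
    and crit: "(\<exists>lam. one_critical C A b m1 m2 Y lam \<and> psd (Smat C A (m1 + m2) lam))
             \<or> ((\<exists>lam. two_critical C A b m1 m2 Y lam) \<and> rank Y < CARD('p))"
  shows "bm_global_min C A b m1 m2 Y"
  using crit
proof
  assume "\<exists>lam. one_critical C A b m1 m2 Y lam \<and> psd (Smat C A (m1 + m2) lam)"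
  then show ?thesis using one_crit_min by blast
next
  assume "(\<exists>lam. two_critical C A b m1 m2 Y lam) \<and> rank Y < CARD('p)"
  then obtain lam where tc: "two_critical C A b m1 m2 Y lam" and rk: "rank Y < CARD('p)" by blast
  have "psd (Smat C A (m1 + m2) lam)" using two_crit_psd[OF symC symA tc rk] .
  moreover have "one_critical C A b m1 m2 Y lam" using tc by (simp add: two_critical_def)
  ultimately show ?thesis using one_crit_min by blast
qed

end
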